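(* Let $t\ge1$ and $n=t+1$. The gadget $\mathtt{SecMultSub}$ defined below is $t$-NI secure. $\mathtt{SecMultSub}$ takes as input Boolean sharings $(\mathbf{x}_i)$, $(\mathbf{y}_i)$ of vectors $\mathbf{x},\mathbf{y}\in\mathbb{F}_q^l$ and a Boolean sharing $(c_i)$ of $c\in\mathbb{F}_q$, and computes: for $j=1,\dots,l$: $(\mathbf{t}[j]_i):=\mathtt{SecMult}((\mathbf{x}[j]_i),(c_i))$ and $\mathbf{z}[j]_i:=\mathbf{y}[j]_i-\mathbf{t}[j]_i$ for every $i$. It returns $(\mathbf{z}_i)$.
   Context: A Boolean sharing of $x\in\mathbb{F}_q$ is a tuple $(x_1,\dots,x_n)$ with $x=x_1+\cdots+x_n$ (field addition); vectors are shared coordinate-wise, and $\mathbf{v}[j]$ is the $j$-th coordinate. $\mathtt{SecMult}$ is the ISW masked multiplication gadget, taking Boolean sharings of $a,b\in\mathbb{F}_q$ and returning a Boolean sharing of $a\cdot b$; it is $t$-SNI. Probing model: an adversary may place probes on intermediate values (internal wires) of a gadget and on its output shares. A gadget with one output sharing and some input sharings is $t$-NI (resp. $t$-SNI) secure if any set of at most $t_1$ probes on internal wires and $t_2$ probes on output shares, with $t_1+t_2\le t$, can be perfectly simulated using at most $t_1+t_2$ (resp. $t_1$) shares of each of its input sharings. *)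

theory Defs
  imports "HOL-Probability.Probability"
begin

text \<open>Share indices are 0..<n, vector coordinates are 0..<l.
  A Boolean (additive) sharing of a field element is a function nat => 'a
  (share i = value at i < n); a sharing of a vector in F_q^l is
  xs :: nat => nat => 'a, where xs i j is coordinate j of share i.\<close>

datatype isw_wire =
    IA nat
  | IB nat
  | IR nat nat
  | IP nat nat
  | ID nat nat
  | IS nat nat      \<comment> \<open>partial sum of c_i after the terms k<m; IS i n = output share c_i\<close>

definition isw_r :: "(nat \<Rightarrow> 'a::field) \<Rightarrow> (nat \<Rightarrow> 'a) \<Rightarrow> (nat \<times> nat \<Rightarrow> 'a) \<Rightarrow> nat \<Rightarrow> nat \<Rightarrow> 'a" where
  "isw_r a b r i k = (if i < k then r (i, k) else (a k * b i - r (k, i)) + a i * b k)"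

fun isw_val :: "(nat \<Rightarrow> 'a::field) \<Rightarrow> (nat \<Rightarrow> 'a) \<Rightarrow> (nat \<times> nat \<Rightarrow> 'a) \<Rightarrow> isw_wire \<Rightarrow> 'a" where
  "isw_val a b r (IA i) = a i"
| "isw_val a b r (IB i) = b i"
| "isw_val a b r (IR i k) = isw_r a b r i k"
| "isw_val a b r (IP i k) = a i * b k"
| "isw_val a b r (ID i k) = a k * b i - r (k, i)"
| "isw_val a b r (IS i m) = a i * b i + (\<Sum>k \<in> {..<m} - {i}. isw_r a b r i k)"

definition isw_valid :: "nat \<Rightarrow> isw_wire \<Rightarrow> bool" where
  "isw_valid n w = (case w of
      IA i \<Rightarrow> i < n
    | IB i \<Rightarrow> i < n
    | IR i k \<Rightarrow> i < n \<and> k < n \<and> i \<noteq> k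
    | IP i k \<Rightarrow> i < n \<and> k < n
    | ID i k \<Rightarrow> k < i \<and> i < n
    | IS i m \<Rightarrow> i < n \<and> m \<le> n)"

datatype sub_wire =
    M nat isw_wire   \<comment> \<open>wire of the j-th SecMult instance (computing t[j] from x[j] and c)\<close>
  | YW nat nat
  | ZW nat nat

definition sub_valid :: "nat \<Rightarrow> nat \<Rightarrow> sub_wire \<Rightarrow> bool" where
  "sub_valid l n w = (case w of
      M j v \<Rightarrow> j < l \<and> isw_valid n v
    | YW j i \<Rightarrow> j < l \<and> i < n
    | ZW j i \<Rightarrow> j < l \<and> i < n)"

text \<open>Random tape: rho (j,i,k) for j<l, i<k<n is the ISW randomness r_ik of the
  j-th SecMult instance; all independent and uniform on F_q.\<close>
definition sub_tape :: "nat \<Rightarrow> nat \<Rightarrow> (nat \<times> nat \<times> nat \<Rightarrow> 'a::{field,finite}) pmf" where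
  "sub_tape l n = Pi_pmf {(j, i, k). j < l \<and> i < k \<and> k < n} 0 (\<lambda>_. pmf_of_set UNIV)"

fun sub_val :: "nat \<Rightarrow> (nat \<Rightarrow> nat \<Rightarrow> 'a::field) \<Rightarrow> (nat \<Rightarrow> nat \<Rightarrow> 'a) \<Rightarrow> (nat \<Rightarrow> 'a)
    \<Rightarrow> (nat \<times> nat \<times> nat \<Rightarrow> 'a) \<Rightarrow> sub_wire \<Rightarrow> 'a" where
  "sub_val n xs ys c rho (M j v) = isw_val (\<lambda>i. xs i j) c (\<lambda>(i, k). rho (j, i, k)) v"
| "sub_val n xs ys c rho (YW j i) = ys i j"
| "sub_val n xs ys c rho (ZW j i) =
     ys i j - isw_val (\<lambda>i. xs i j) c (\<lambda>(i, k). rho (j, i, k)) (IS i n)"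

definition sub_obs :: "nat \<Rightarrow> nat \<Rightarrow> (nat \<Rightarrow> nat \<Rightarrow> 'a::{field,finite}) \<Rightarrow> (nat \<Rightarrow> nat \<Rightarrow> 'a)
    \<Rightarrow> (nat \<Rightarrow> 'a) \<Rightarrow> sub_wire set \<Rightarrow> (sub_wire \<Rightarrow> 'a) pmf" where
  "sub_obs l n xs ys c P = map_pmf (\<lambda>rho. \<lambda>w\<in>P. sub_val n xs ys c rho w) (sub_tape l n)"

text \<open>t-NI: any set of at most t probes (internal wires or output shares; for NI
  the two kinds are counted together) can be perfectly simulated from at most
  |P| shares of each input sharing (x, y, c).\<close>
definition SecMultSub_NI :: "'a::{field,finite} itself \<Rightarrow> nat \<Rightarrow> nat \<Rightarrow> nat \<Rightarrow> bool" where
  "SecMultSub_NI _ l n t =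
    (\<forall>P. finite P \<and> P \<subseteq> {w. sub_valid l n w} \<and> card P \<le> t \<longrightarrow>
      (\<exists>Ix Iy Ic. Ix \<subseteq> {..<n} \<and> Iy \<subseteq> {..<n} \<and> Ic \<subseteq> {..<n} \<and>
         card Ix \<le> card P \<and> card Iy \<le> card P \<and> card Ic \<le> card P \<and>
         (\<exists>Sim :: (nat \<Rightarrow> nat \<Rightarrow> 'a) \<Rightarrow> (nat \<Rightarrow> nat \<Rightarrow> 'a) \<Rightarrow> (nat \<Rightarrow> 'a) \<Rightarrow> (sub_wire \<Rightarrow> 'a) pmf.
           \<forall>(xs :: nat \<Rightarrow> nat \<Rightarrow> 'a) ys c.
             sub_obs l n xs ys c P =
             Sim (\<lambda>i\<in>Ix. \<lambda>j\<in>{..<l}. xs i j) (\<lambda>i\<in>Iy. \<lambda>j\<in>{..<l}. ys i j) (\<lambda>i\<in>Ic. c i))))"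

end

theory Submission
  imports Defs
begin

lemma tape_fin: "finite {(j, i, k). j < (l::nat) \<and> i < k \<and> k < (n::nat)}"
proof -
  have "{(j, i, k). j < (l::nat) \<and> i < k \<and> k < (n::nat)} \<subseteq> {..<l} \<times> {..<n} \<times> {..<n}" by auto
  thus ?thesis by (rule finite_subset) (intro finite_SigmaI finite_lessThan)
qed

lemma tape_shift:
  fixes l n :: nat and \<delta> :: "nat \<times> nat \<times> nat \<Rightarrow> 'a::{field,finite}"
  defines "D \<equiv> {(j, i, k). j < l \<and> i < k \<and> k < (n::nat)}"
  shows "map_pmf (\<lambda>\<rho> x. if x \<in> D then \<rho> x + \<delta> x else 0) (sub_tape l n) = (sub_tape l n :: (_ \<Rightarrow> 'a) pmf)"
proof -
  let ?S = "PiE_dflt D (0::'a) (\<lambda>_. UNIV)"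
  have fD: "finite D" unfolding D_def by (rule tape_fin)
  have T: "sub_tape l n = pmf_of_set ?S"
    unfolding sub_tape_def D_def[symmetric] using fD by (intro Pi_pmf_of_set) auto
  have finS: "finite ?S"
  proof -
    have "?S = (\<lambda>h x. if x \<in> D then h x else 0) ` PiE D (\<lambda>_. UNIV)" by (rule dflt_image_PiE[symmetric])
    thus ?thesis using fD by (simp add: finite_PiE)
  qed
  have ne: "?S \<noteq> {}" by (auto simp: PiE_dflt_def intro!: exI[of _ "\<lambda>_. 0"])
  have bij: "bij_betw (\<lambda>\<rho> x. if x \<in> D then \<rho> x + \<delta> x else 0) ?S ?S"
    by (rule bij_betwI[of _ _ _ "\<lambda>\<rho> x. if x \<in> D then \<rho> x - \<delta> x else 0"]) (auto simp: PiE_dflt_def fun_eq_iff)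
  show ?thesis unfolding T by (rule map_pmf_of_set_bij_betw[OF bij ne finS])
qed

definition dlt :: "(nat \<Rightarrow> 'a) \<Rightarrow> (nat \<Rightarrow> 'a) \<Rightarrow> (nat \<Rightarrow> 'a) \<Rightarrow> (nat \<Rightarrow> 'a) \<Rightarrow> nat set \<Rightarrow> nat \<Rightarrow> nat \<Rightarrow> 'a::field" where
  "dlt a b a' b' K p q = (if p \<in> K then 0 else if q \<in> K then (a' p * b' q + a' q * b' p) - (a p * b q + a q * b p)
     else a' p * b' q - a p * b q)"

lemma isw_r_shift:
  fixes a b a' b' :: "nat \<Rightarrow> 'a::field"
  assumes K: "\<forall>i\<in>K. a i = a' i \<and> b i = b' i" and iK: "i \<in> K" and ik: "i \<noteq> k" "i < n" "k < n"
    and r': "\<forall>p q. p < q \<and> q < n \<longrightarrow> r' (p, q) = r (p, q) + dlt a b a' b' K p q"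
  shows "isw_r a' b' r' i k = isw_r a b r i k"
proof (cases "i < k")
  case True
  then show ?thesis using r' iK ik by (simp add: isw_r_def dlt_def)
next
  case False
  hence ki: "k < i" using ik by simp
  have e: "r' (k, i) = r (k, i) + dlt a b a' b' K k i" using r' ki ik by simp
  show ?thesis
  proof (cases "k \<in> K")
    case True
    then show ?thesis using e ki K iK by (simp add: isw_r_def dlt_def)
  next
    case False
    then show ?thesis using e ki K iK by (simp add: isw_r_def dlt_def algebra_simps)
  qed
qed

lemma isw_IS_shift:
  fixes a b a' b' :: "nat \<Rightarrow> 'a::field"
  assumes K: "\<forall>i\<in>K. a i = a' i \<and> b i = b' i" and iK: "i \<in> K" and hin: "i < n" "m \<le> n"
    and r': "\<forall>p q. p < q \<and> q < n \<longrightarrow> r' (p, q) = r (p, q) + dlt a b a' b' K p q"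
  shows "isw_val a' b' r' (IS i m) = isw_val a b r (IS i m)"
proof -
  have "(\<Sum>k \<in> {..<m} - {i}. isw_r a' b' r' i k) = (\<Sum>k \<in> {..<m} - {i}. isw_r a b r i k)"
    by (rule sum.cong[OF refl], rule isw_r_shift[OF K iK _ _ _ r']) (use hin in auto)
  thus ?thesis using K iK by simp
qed

lemma isw_ID_shift:
  fixes a b a' b' :: "nat \<Rightarrow> 'a::field"
  assumes ki: "k < i" "i < n"
    and r': "\<forall>p q. p < q \<and> q < n \<longrightarrow> r' (p, q) = r (p, q) + dlt a b a' b' K p q"
    and h1: "k \<in> K \<longrightarrow> a k = a' k \<and> b i = b' i"
    and h2: "k \<notin> K \<and> i \<in> K \<longrightarrow> a i = a' i \<and> b k = b' k"
  shows "isw_val a' b' r' (ID i k) = isw_val a b r (ID i k)"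
proof -
  have e: "r' (k, i) = r (k, i) + dlt a b a' b' K k i" using r' ki by simp
  show ?thesis using e h1 h2 by (simp add: dlt_def algebra_simps)
qed

definition KK :: "nat \<Rightarrow> sub_wire set \<Rightarrow> nat set" where
  "KK j P = {i. \<exists>k. M j (IR i k) \<in> P} \<union> {i. \<exists>m. M j (IS i m) \<in> P} \<union> {i. ZW j i \<in> P}"

fun fA :: "sub_wire \<Rightarrow> nat set" where
  "fA (M j (IA i)) = {i}"
| "fA (M j (IB i)) = {}"
| "fA (M j (IR i k)) = {i}"
| "fA (M j (IP i k)) = {i}"
| "fA (M j (ID i k)) = {}"
| "fA (M j (IS i m)) = {i}"
| "fA (YW j i) = {}"
| "fA (ZW j i) = {i}"

fun fB :: "sub_wire set \<Rightarrow> sub_wire \<Rightarrow> nat set" where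
  "fB P (M j (IA i)) = {}"
| "fB P (M j (IB i)) = {i}"
| "fB P (M j (IR i k)) = {i}"
| "fB P (M j (IP i k)) = {k}"
| "fB P (M j (ID i k)) = (if k \<in> KK j P then {i} else if i \<in> KK j P then {k} else {})"
| "fB P (M j (IS i m)) = {i}"
| "fB P (YW j i) = {}"
| "fB P (ZW j i) = {i}"

fun fY :: "sub_wire \<Rightarrow> nat set" where
  "fY (M j v) = {}"
| "fY (YW j i) = {i}"
| "fY (ZW j i) = {i}"

lemma fA_card: "card (fA w) \<le> 1"
  by (cases w rule: fA.cases) auto
lemma fB_card: "card (fB P w) \<le> 1"
  by (cases "(P, w)" rule: fB.cases) auto
lemma fY_card: "card (fY w) \<le> 1"
  by (cases w rule: fY.cases) auto

lemma card_UN_one: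
  assumes "finite P" "\<And>w. card (f w) \<le> (1::nat)"
  shows "card (\<Union>w\<in>P. f w) \<le> card P"
proof -
  have "card (\<Union>w\<in>P. f w) \<le> (\<Sum>w\<in>P. card (f w))" by (rule card_UN_le[OF assms(1)])
  also have "\<dots> \<le> (\<Sum>w\<in>P. 1)" by (rule sum_mono) (rule assms(2))
  finally show ?thesis by simp
qed

lemma KK_A: "KK j P \<subseteq> (\<Union>w\<in>P. fA w)"
  unfolding KK_def by (auto intro: rev_bexI)
lemma KK_B: "KK j P \<subseteq> (\<Union>w\<in>P. fB P w)"
  unfolding KK_def by (auto intro: rev_bexI)

lemma valid_fA: "sub_valid l n w \<Longrightarrow> fA w \<subseteq> {..<n}"
  by (cases w rule: fA.cases) (auto simp: sub_valid_def isw_valid_def)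
lemma valid_fB: "sub_valid l n w \<Longrightarrow> fB P w \<subseteq> {..<n}"
  by (cases "(P, w)" rule: fB.cases) (auto simp: sub_valid_def isw_valid_def)
lemma valid_fY: "sub_valid l n w \<Longrightarrow> fY w \<subseteq> {..<n}"
  by (cases w rule: fY.cases) (auto simp: sub_valid_def isw_valid_def)

lemma main_inv:
  fixes xs xs' ys ys' :: "nat \<Rightarrow> nat \<Rightarrow> 'a::{field,finite}" and c c' :: "nat \<Rightarrow> 'a"
  assumes PV: "P \<subseteq> {w. sub_valid l n w}"
    and hx: "\<forall>i\<in>(\<Union>w\<in>P. fA w). \<forall>j<l. xs i j = xs' i j"
    and hc: "\<forall>i\<in>(\<Union>w\<in>P. fB P w). c i = c' i"
    and hy: "\<forall>i\<in>(\<Union>w\<in>P. fY w). \<forall>j<l. ys i j = ys' i j"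
  shows "sub_obs l n xs ys c P = sub_obs l n xs' ys' c' P"
proof -
  define D where "D = {(j, i, k). j < l \<and> i < k \<and> k < (n::nat)}"
  define \<delta> :: "nat \<times> nat \<times> nat \<Rightarrow> 'a" where
    "\<delta> = (\<lambda>(j, p, q). dlt (\<lambda>i. xs i j) c (\<lambda>i. xs' i j) c' (KK j P) p q)"
  define sh where "sh = (\<lambda>(\<rho>::nat \<times> nat \<times> nat \<Rightarrow> 'a) x. if x \<in> D then \<rho> x + \<delta> x else 0)"
  have claim: "sub_val n xs ys c \<rho> w = sub_val n xs' ys' c' (sh \<rho>) w" if wP: "w \<in> P" for \<rho> w
  proof -
    have wv: "sub_valid l n w" using PV wP by auto
    have Kj: "\<forall>i\<in>KK j P. xs i j = xs' i j \<and> c i = c' i" if "j < l" for j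
      using KK_A[of j P] KK_B[of j P] hx hc that by blast
    have rr: "\<forall>p q. p < q \<and> q < n \<longrightarrow> (\<lambda>(i, k). sh \<rho> (j, i, k)) (p, q) =
        (\<lambda>(i, k). \<rho> (j, i, k)) (p, q) + dlt (\<lambda>i. xs i j) c (\<lambda>i. xs' i j) c' (KK j P) p q"
      if "j < l" for j
      using that by (simp add: sh_def D_def \<delta>_def)
    show ?thesis
    proof (cases w)
      case (M j v)
      have jl: "j < l" and vv: "isw_valid n v" using wv M by (auto simp: sub_valid_def)
      show ?thesis
      proof (cases v)
        case (IA i)
        then show ?thesis using M wP hx jl by force
      next
        case (IB i)
        then show ?thesis using M wP hc by force
      next
        case (IR i k)
        have iK: "i \<in> KK j P" using M IR wP by (auto simp: KK_def)
        have "isw_r (\<lambda>i. xs' i j) c' (\<lambda>(i, k). sh \<rho> (j, i, k)) i k = isw_r (\<lambda>i. xs i j) c (\<lambda>(i, k). \<rho> (j, i, k)) i k"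
          by (rule isw_r_shift[OF Kj[OF jl] iK _ _ _ rr[OF jl]]) (use vv IR in \<open>auto simp: isw_valid_def\<close>)
        then show ?thesis using M IR by simp
      next
        case (IP i k)
        then show ?thesis using M wP hx hc jl by force
      next
        case (ID i k)
        have vk: "k < i" "i < n" using vv ID by (auto simp: isw_valid_def)
        have h1: "k \<in> KK j P \<longrightarrow> xs k j = xs' k j \<and> c i = c' i"
          using Kj[OF jl] hc wP M ID by force
        have h2: "k \<notin> KK j P \<and> i \<in> KK j P \<longrightarrow> xs i j = xs' i j \<and> c k = c' k"
          using Kj[OF jl] hc wP M ID by force
        have "isw_val (\<lambda>i. xs' i j) c' (\<lambda>(i, k). sh \<rho> (j, i, k)) (ID i k) = isw_val (\<lambda>i. xs i j) c (\<lambda>(i, k). \<rho> (j, i, k)) (ID i k)"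
          by (rule isw_ID_shift[OF vk rr[OF jl]]) (use h1 h2 in auto)
        then show ?thesis using M ID by simp
      next
        case (IS i m)
        have iK: "i \<in> KK j P" using M IS wP by (auto simp: KK_def)
        have "isw_val (\<lambda>i. xs' i j) c' (\<lambda>(i, k). sh \<rho> (j, i, k)) (IS i m) = isw_val (\<lambda>i. xs i j) c (\<lambda>(i, k). \<rho> (j, i, k)) (IS i m)"
          by (rule isw_IS_shift[OF Kj[OF jl] iK _ _ rr[OF jl]]) (use vv IS in \<open>auto simp: isw_valid_def\<close>)
        then show ?thesis using M IS by simp
      qed
    next
      case (YW j i)
      then show ?thesis using wv wP hy by (force simp: sub_valid_def)
    next
      case (ZW j i)
      have jl: "j < l" and "i < n" using wv ZW by (auto simp: sub_valid_def)
      have iK: "i \<in> KK j P" using ZW wP by (auto simp: KK_def)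
      have "isw_val (\<lambda>i. xs' i j) c' (\<lambda>(i, k). sh \<rho> (j, i, k)) (IS i n) = isw_val (\<lambda>i. xs i j) c (\<lambda>(i, k). \<rho> (j, i, k)) (IS i n)"
        by (rule isw_IS_shift[OF Kj[OF jl] iK _ _ rr[OF jl]]) (use \<open>i < n\<close> in auto)
      moreover have "ys i j = ys' i j" using hy ZW wP jl by force
      ultimately show ?thesis using ZW by simp
    qed
  qed
  have "sub_obs l n xs ys c P = map_pmf (\<lambda>\<rho>. \<lambda>w\<in>P. sub_val n xs' ys' c' (sh \<rho>) w) (sub_tape l n)"
    unfolding sub_obs_def by (intro map_pmf_cong refl) (auto simp: claim restrict_def fun_eq_iff)
  also have "\<dots> = map_pmf (\<lambda>\<rho>. \<lambda>w\<in>P. sub_val n xs' ys' c' \<rho> w) (map_pmf sh (sub_tape l n))"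
    by (simp add: pmf.map_comp o_def)
  also have "map_pmf sh (sub_tape l n) = sub_tape l n"
    unfolding sh_def D_def by (rule tape_shift)
  finally show ?thesis unfolding sub_obs_def .
qed

theorem lemma3:
  fixes t l :: nat
  assumes "t \<ge> 1"
  shows "SecMultSub_NI TYPE('a::{field,finite}) l (t + 1) t"
  unfolding SecMultSub_NI_def
proof (intro allI impI)
  fix P assume H: "finite P \<and> P \<subseteq> {w. sub_valid l (t + 1) w} \<and> card P \<le> t"
  define Ix where "Ix = (\<Union>w\<in>P. fA w)"
  define Ic where "Ic = (\<Union>w\<in>P. fB P w)"
  define Iy where "Iy = (\<Union>w\<in>P. fY w)"
  define Sim :: "(nat \<Rightarrow> nat \<Rightarrow> 'a) \<Rightarrow> (nat \<Rightarrow> nat \<Rightarrow> 'a) \<Rightarrow> (nat \<Rightarrow> 'a) \<Rightarrow> (sub_wire \<Rightarrow> 'a) pmf" where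
    "Sim = (\<lambda>xr yr cr. sub_obs l (t + 1) (\<lambda>i j. if i \<in> Ix \<and> j < l then xr i j else 0)
        (\<lambda>i j. if i \<in> Iy \<and> j < l then yr i j else 0) (\<lambda>i. if i \<in> Ic then cr i else 0) P)"
  have s1: "Ix \<subseteq> {..<t + 1}" unfolding Ix_def using H valid_fA by blast
  have s2: "Iy \<subseteq> {..<t + 1}" unfolding Iy_def using H valid_fY by blast
  have s3: "Ic \<subseteq> {..<t + 1}" unfolding Ic_def using H valid_fB by blast
  have c1: "card Ix \<le> card P" unfolding Ix_def using H by (intro card_UN_one fA_card) auto
  have c2: "card Iy \<le> card P" unfolding Iy_def using H by (intro card_UN_one fY_card) auto
  have c3: "card Ic \<le> card P" unfolding Ic_def using H by (intro card_UN_one fB_card) auto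
  have eq: "sub_obs l (t + 1) xs ys c P =
       Sim (\<lambda>i\<in>Ix. \<lambda>j\<in>{..<l}. xs i j) (\<lambda>i\<in>Iy. \<lambda>j\<in>{..<l}. ys i j) (\<lambda>i\<in>Ic. c i)"
    for xs ys :: "nat \<Rightarrow> nat \<Rightarrow> 'a" and c
    unfolding Sim_def
    by (rule main_inv) (use H in \<open>auto simp: Ix_def Iy_def Ic_def\<close>)
  show "\<exists>Ix Iy Ic. Ix \<subseteq> {..<t + 1} \<and> Iy \<subseteq> {..<t + 1} \<and> Ic \<subseteq> {..<t + 1} \<and>
         card Ix \<le> card P \<and> card Iy \<le> card P \<and> card Ic \<le> card P \<and>
         (\<exists>Sim :: (nat \<Rightarrow> nat \<Rightarrow> 'a) \<Rightarrow> (nat \<Rightarrow> nat \<Rightarrow> 'a) \<Rightarrow> (nat \<Rightarrow> 'a) \<Rightarrow> (sub_wire \<Rightarrow> 'a) pmf.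
           \<forall>(xs :: nat \<Rightarrow> nat \<Rightarrow> 'a) ys c.
             sub_obs l (t + 1) xs ys c P =
             Sim (\<lambda>i\<in>Ix. \<lambda>j\<in>{..<l}. xs i j) (\<lambda>i\<in>Iy. \<lambda>j\<in>{..<l}. ys i j) (\<lambda>i\<in>Ic. c i))"
    using s1 s2 s3 c1 c2 c3 eq by blast
qed

end
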